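(* Let $n\ge 1$. There is a one-to-one correspondence between the families of spherical simplices generating the reflection group $A_n$ (families considered up to isometry) and the trees with $n+1$ vertices (considered up to isomorphism). The correspondence is given as follows: realize the family by unit normal vectors $\pm f_1,\dots,\pm f_n$ which, suitably normalized, lie in the root system $\Delta(A_n)=\{\pm(h_i-h_j): 0\le i<j\le n\}$, where $h_0,\dots,h_n$ is the standard basis of $\mathbb{R}^{n+1}$; the associated graph has vertices $v_0,\dots,v_n$ (corresponding to $h_0,\dots,h_n$), with $v_i$ and $v_j$ joined by an edge iff $\pm(h_i-h_j)$ is one of the $f_k$. The correspondence is well defined and is a bijection onto the set of trees with $n+1$ vertices.
   Context: A spherical simplex in $S^{m}\subset\mathbb{R}^{m+1}$ is determined by $m+1$ linearly independent unit vectors $f_1,\dots,f_{m+1}$ (outer normals to its facets). The $m+1$ hyperplanes $f_i^\perp$ cut $S^m$ into $2^{m+1}$ simplices, encoded by the vectors $\pm f_1,\dots,\pm f_{m+1}$; this set of simplices is called a family. All simplices of a family generate the same group, generated by the reflections in the hyperplanes $f_i^\perp$; a family generates a reflection group $G$ if this group is $G$ (up to conjugation by an orthogonal transformation). $A_n$ denotes the finite Coxeter (Weyl) group of type $A_n$, acting on the $n$-dimensional subspace $\{\sum x_i=0\}$ of $\mathbb{R}^{n+1}$, so the relevant simplices are $(n-1)$-dimensional. *)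

theory Defs
  imports "HOL-Analysis.Analysis"
begin

text \<open>Ambient space R^(n+1) is real^'i with CARD('i) = n+1; h_i = axis i 1.
  V is the hyperplane of vectors with coordinate sum 0.\<close>

definition hyperplaneV :: "(real^'i::finite) set" where
  "hyperplaneV = {x. (\<Sum>i\<in>UNIV. x $ i) = 0}"

text \<open>A family of spherical simplices in the unit sphere of V: the set of vectors
  +-f_1,...,+-f_n for n = dim V linearly independent unit vectors f_k in V.\<close>

definition is_family :: "(real^'i::finite) set \<Rightarrow> bool" where
  "is_family F \<longleftrightarrow> (\<exists>B. independent B \<and> card B = CARD('i) - 1 \<and>
      (\<forall>f\<in>B. norm f = 1 \<and> f \<in> hyperplaneV) \<and> F = B \<union> uminus ` B)"

definition reflection_along :: "(real^'i::finite) \<Rightarrow> real^'i \<Rightarrow> real^'i" where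
  "reflection_along f x = x - (2 * (x \<bullet> f) / (f \<bullet> f)) *\<^sub>R f"

text \<open>Group generated by the reflections in the hyperplanes f-perp, f in F
  (reflections are involutions, so the generated monoid is the generated group).\<close>

inductive_set refl_group :: "(real^'i::finite) set \<Rightarrow> (real^'i \<Rightarrow> real^'i) set"
  for F where
  id_in: "id \<in> refl_group F"
| step: "f \<in> F \<Longrightarrow> g \<in> refl_group F \<Longrightarrow> reflection_along f \<circ> g \<in> refl_group F"

text \<open>The Weyl group A_n: permutations of coordinates (acting on V, and trivially on
  the orthogonal line spanned by (1,...,1)).\<close>

definition weyl_A :: "((real^'i::finite) \<Rightarrow> real^'i) set" where
  "weyl_A = {(\<lambda>x. \<chi> i. x $ (\<sigma> i)) | \<sigma>. \<sigma> permutes (UNIV :: 'i set)}"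

definition isometry_V :: "((real^'i::finite) \<Rightarrow> real^'i) \<Rightarrow> bool" where
  "isometry_V Q \<longleftrightarrow> orthogonal_transformation Q \<and> Q ` hyperplaneV = hyperplaneV"

definition generates_A :: "(real^'i::finite) set \<Rightarrow> bool" where
  "generates_A F \<longleftrightarrow>
     (\<exists>Q. isometry_V Q \<and> (\<lambda>g. Q \<circ> g \<circ> inv Q) ` refl_group F = weyl_A)"

definition family_isometric :: "(real^'i::finite) set \<Rightarrow> (real^'i) set \<Rightarrow> bool" where
  "family_isometric F F' \<longleftrightarrow> (\<exists>Q. isometry_V Q \<and> Q ` F = F')"

definition root_vec :: "'i::finite \<Rightarrow> 'i \<Rightarrow> real^'i" where
  "root_vec i j = (1 / sqrt 2) *\<^sub>R (axis i 1 - axis j 1)"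

definition root_realized :: "(real^'i::finite) set \<Rightarrow> bool" where
  "root_realized F \<longleftrightarrow> F \<subseteq> {root_vec i j | i j. i \<noteq> j}"

definition graph_of :: "(real^'i::finite) set \<Rightarrow> 'i \<Rightarrow> 'i \<Rightarrow> bool" where
  "graph_of F i j \<longleftrightarrow> i \<noteq> j \<and> root_vec i j \<in> F"

definition corresponds :: "(real^'i::finite) set \<Rightarrow> ('i \<Rightarrow> 'i \<Rightarrow> bool) \<Rightarrow> bool" where
  "corresponds F T \<longleftrightarrow>
     (\<exists>Q. isometry_V Q \<and> root_realized (Q ` F) \<and> T = graph_of (Q ` F))"

definition has_cycle :: "('i \<Rightarrow> 'i \<Rightarrow> bool) \<Rightarrow> bool" where
  "has_cycle E \<longleftrightarrow> (\<exists>cs. length cs \<ge> 3 \<and> distinct cs \<and>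
      (\<forall>k. Suc k < length cs \<longrightarrow> E (cs ! k) (cs ! Suc k)) \<and> E (last cs) (hd cs))"

definition is_tree :: "('i \<Rightarrow> 'i \<Rightarrow> bool) \<Rightarrow> bool" where
  "is_tree E \<longleftrightarrow> symp E \<and> irreflp E \<and> (\<forall>u v. E\<^sup>*\<^sup>* u v) \<and> \<not> has_cycle E"

definition graph_iso :: "('i \<Rightarrow> 'i \<Rightarrow> bool) \<Rightarrow> ('i \<Rightarrow> 'i \<Rightarrow> bool) \<Rightarrow> bool" where
  "graph_iso E E' \<longleftrightarrow> (\<exists>\<pi>. bij \<pi> \<and> (\<forall>u v. E u v \<longleftrightarrow> E' (\<pi> u) (\<pi> v)))"

end

theory Submission
  imports Defs "HOL-Combinatorics.Permutations"
begin

definition permv :: "('i::finite \<Rightarrow> 'i) \<Rightarrow> real^'i \<Rightarrow> real^'i" where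
  "permv \<sigma> x = (\<chi> i. x $ (\<sigma> i))"

definition RS :: "(real^'i::finite) set" where
  "RS = {root_vec i j | i j. i \<noteq> j}"

lemma root_vec_comp: "root_vec i j $ k =
   (if k = i then 1 / sqrt 2 else 0) - (if k = j then 1 / sqrt 2 else 0)"
  by (simp add: root_vec_def axis_def)

lemma root_vec_neg: "- root_vec i j = root_vec j i"
  by (simp add: vec_eq_iff root_vec_comp)

lemma inner_root_vec: "x \<bullet> root_vec i j = (x $ i - x $ j) / sqrt 2"
  by (simp add: root_vec_def inner_diff_right inner_axis diff_divide_distrib)

lemma root_vec_self_inner: "i \<noteq> j \<Longrightarrow> root_vec i j \<bullet> root_vec i j = 1"
  by (simp add: inner_root_vec root_vec_comp)

lemma norm_root_vec: "i \<noteq> j \<Longrightarrow> norm (root_vec i j) = 1"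
  by (simp add: norm_eq_sqrt_inner root_vec_self_inner)

lemma root_vec_hyp: "root_vec i j \<in> hyperplaneV"
proof -
  have "(\<Sum>k\<in>UNIV. root_vec i j $ k) = (\<Sum>k\<in>UNIV. (if k = i then 1 / sqrt 2 else 0))
      - (\<Sum>k\<in>UNIV. (if k = j then 1 / sqrt 2 else 0))"
    by (simp add: root_vec_comp sum_subtractf)
  also have "\<dots> = 0" by simp
  finally show ?thesis by (simp add: hyperplaneV_def)
qed

lemma root_vec_eq:
  assumes "i \<noteq> j" shows "root_vec i j = root_vec k l \<longleftrightarrow> i = k \<and> j = l"
proof
  assume h: "root_vec i j = root_vec k l"
  have a: "root_vec i j $ i = root_vec k l $ i" "root_vec i j $ j = root_vec k l $ j"
    using h by auto
  show "i = k \<and> j = l"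
    using a assms by (auto simp: root_vec_comp split: if_splits)
qed auto

lemma root_vec_eq_neg:
  assumes "i \<noteq> j" shows "root_vec i j = - root_vec k l \<longleftrightarrow> i = l \<and> j = k"
  using root_vec_eq[OF assms] by (simp add: root_vec_neg)

lemma root_vec_ne_zero: "i \<noteq> j \<Longrightarrow> root_vec i j \<noteq> 0"
proof
  assume "i \<noteq> j" "root_vec i j = 0"
  then show False using norm_root_vec[of i j] by simp
qed

lemma refl_comp: "reflection_along f x $ k = x $ k - (2 * (x \<bullet> f) / (f \<bullet> f)) * f $ k"
  unfolding reflection_along_def by (simp only: vector_minus_component vector_scaleR_component real_scaleR_def)

lemma sqrt2_cancel: "2 * (y / sqrt 2) * (1 / sqrt 2) = (y::real)"
  by (simp add: field_simps)

lemma refl_root_vec: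
  assumes "a \<noteq> b"
  shows "reflection_along (root_vec a b) = permv (Transposition.transpose a b)"
proof
  fix x :: "real^'a"
  have c: "reflection_along (root_vec a b) x $ k =
        x $ k - 2 * ((x $ a - x $ b) / sqrt 2) * root_vec a b $ k" for k
  proof -
    have "reflection_along (root_vec a b) x $ k = x $ k -
         (2 * (x \<bullet> root_vec a b) / (root_vec a b \<bullet> root_vec a b)) * root_vec a b $ k"
      by (simp add: reflection_along_def)
    also have "\<dots> = x $ k - (2 * (x \<bullet> root_vec a b)) * root_vec a b $ k"
      using root_vec_self_inner[OF assms] by simp
    finally show ?thesis by (simp add: inner_root_vec)
  qed
  show "reflection_along (root_vec a b) x = permv (Transposition.transpose a b) x"
    unfolding vec_eq_iff
  proof
    fix k
    show "reflection_along (root_vec a b) x $ k = permv (Transposition.transpose a b) x $ k"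
    proof (cases "k = a")
      case True
      have ra: "root_vec a b $ a = 1 / sqrt 2" using assms by (simp add: root_vec_comp)
      show ?thesis using assms True unfolding True c ra sqrt2_cancel
        by (simp add: permv_def)
    next
      case False
      then show ?thesis
      proof (cases "k = b")
        case True
        have rb: "root_vec a b $ b = - (1 / sqrt 2)" using assms by (simp add: root_vec_comp)
        have e: "x $ b - 2 * ((x $ a - x $ b) / sqrt 2) * - (1 / sqrt 2) = x $ a"
          by (simp add: field_simps)
        show ?thesis using assms True unfolding True c rb e
          by (simp add: permv_def)
      next
        case False
        then show ?thesis using assms \<open>k \<noteq> a\<close> unfolding c permv_def
          by (simp add: root_vec_comp)
      qed
    qed
  qed
qed

lemma axis_diff_root: "axis i 1 - axis j 1 = sqrt 2 *\<^sub>R root_vec i j"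
  unfolding root_vec_def scaleR_scaleR by simp

lemma RS_finite: "finite (RS :: (real^'i::finite) set)"
proof -
  have "RS \<subseteq> (\<lambda>(i,j). root_vec i j) ` (UNIV :: ('i \<times> 'i) set)"
  proof
    fix r :: "real^'i" assume "r \<in> RS"
    then obtain i j where "r = root_vec i j" unfolding RS_def by blast
    then have "r = (\<lambda>(i,j). root_vec i j) (i,j)" by simp
    then show "r \<in> (\<lambda>(i,j). root_vec i j) ` (UNIV :: ('i \<times> 'i) set)" by blast
  qed
  then show ?thesis by (rule finite_subset) simp
qed

lemma RS_neg: assumes "r \<in> RS" shows "- r \<in> RS"
proof -
  from assms obtain i j where "i \<noteq> j" "r = root_vec i j" unfolding RS_def by blast
  then show ?thesis unfolding RS_def using root_vec_neg by force
qed

lemma ot_inner: "orthogonal_transformation Q \<Longrightarrow> Q x \<bullet> Q y = x \<bullet> y"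
  by (simp add: orthogonal_transformation_def)

lemma refl_conj:
  fixes Q :: "real^'i::finite \<Rightarrow> real^'i"
  assumes Q: "orthogonal_transformation Q"
  shows "Q \<circ> reflection_along f \<circ> inv Q = reflection_along (Q f)"
proof
  fix y
  have sQ: "surj Q" using Q orthogonal_transformation_surj by blast
  define x where "x = inv Q y"
  have y: "Q x = y" unfolding x_def using sQ by (simp add: surj_f_inv_f)
  have lin: "linear Q" using Q orthogonal_transformation_linear by blast
  have "(Q \<circ> reflection_along f \<circ> inv Q) y = Q (x - (2 * (x \<bullet> f) / (f \<bullet> f)) *\<^sub>R f)"
    by (simp add: x_def reflection_along_def)
  also have "\<dots> = Q x - (2 * (x \<bullet> f) / (f \<bullet> f)) *\<^sub>R Q f"
    using lin by (simp add: linear_diff linear_scale)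
  also have "\<dots> = y - (2 * (y \<bullet> Q f) / (Q f \<bullet> Q f)) *\<^sub>R Q f"
    using y ot_inner[OF Q, of x f] ot_inner[OF Q, of f f] by simp
  finally show "(Q \<circ> reflection_along f \<circ> inv Q) y = reflection_along (Q f) y"
    by (simp add: reflection_along_def)
qed

lemma permv_axis:
  assumes "\<sigma> permutes (UNIV :: 'i::finite set)"
  shows "permv \<sigma> (axis a 1) = axis (inv \<sigma> a) (1::real)"
proof -
  have "(\<sigma> i = a) = (i = inv \<sigma> a)" for i
    using assms by (metis permutes_inverses(1) permutes_inverses(2))
  then show ?thesis by (simp add: permv_def vec_eq_iff axis_def)
qed

lemma refl_self: "norm v = 1 \<Longrightarrow> reflection_along v v = - v"
proof -
  assume "norm v = 1"
  then have "v \<bullet> v = 1" by (simp add: dot_square_norm)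
  then show ?thesis by (simp add: reflection_along_def algebra_simps scaleR_2)
qed

lemma permv_refl_root:
  fixes v :: "real^'i::finite"
  assumes p: "\<sigma> permutes (UNIV :: 'i set)" and eq: "permv \<sigma> = reflection_along v"
    and n: "norm v = 1"
  shows "v \<in> RS"
proof -
  have vv: "v \<bullet> v = 1" using n by (simp add: dot_square_norm)
  have "\<sigma> \<noteq> id"
  proof
    assume "\<sigma> = id"
    then have "permv \<sigma> v = v" by (simp add: permv_def vec_eq_iff)
    then have "v = - v" using eq refl_self[OF n] by simp
    then have "v + v = 0" by (metis add.right_inverse)
    then have "(2::real) *\<^sub>R v = 0" by (simp add: scaleR_2)
    then have "v = 0" by simp
    then show False using n by simp
  qed
  then obtain k where k: "\<sigma> k \<noteq> k" by (auto simp: fun_eq_iff)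
  define a where "a = \<sigma> k"
  define b where "b = inv \<sigma> a"
  have bk: "b = k" unfolding b_def a_def using p by (simp add: permutes_inverses(2))
  have ab: "a \<noteq> b" using k bk a_def by simp
  have "axis b 1 = reflection_along v (axis a 1)"
    using permv_axis[OF p, of a] eq b_def by simp
  also have "\<dots> = axis a 1 - (2 * (v $ a)) *\<^sub>R v"
    using vv by (simp add: reflection_along_def inner_axis' inner_commute[of "axis a 1"])
  finally have E: "axis b 1 = axis a 1 - (2 * (v $ a)) *\<^sub>R v" .
  have Ec: "(if i = b then 1 else 0) = (if i = a then 1 else 0) - 2 * v $ a * v $ i" for i
  proof -
    have "axis b (1::real) $ i = (axis a 1 - (2 * (v $ a)) *\<^sub>R v) $ i" using E by simp
    then show ?thesis by (simp add: axis_def)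
  qed
  have va2: "2 * v $ a * v $ a = 1" using Ec[of a] ab by simp
  have vb: "v $ b = - v $ a"
  proof -
    have "2 * v $ a * v $ b = -1" using Ec[of b] ab by simp
    then have "2 * v $ a * v $ b + 2 * v $ a * v $ a = 0" using va2 by simp
    then have "2 * v $ a * (v $ b + v $ a) = 0" by (simp add: algebra_simps)
    moreover have "v $ a \<noteq> 0" using va2 by auto
    ultimately show ?thesis by simp
  qed
  have vi: "v $ i = 0" if "i \<noteq> a" "i \<noteq> b" for i
  proof -
    have "2 * v $ a * v $ i = 0" using Ec[of i] that by simp
    moreover have "v $ a \<noteq> 0" using va2 by auto
    ultimately show ?thesis by simp
  qed
  have "(v $ a)^2 = (1 / sqrt 2)^2" using va2 by (simp add: power2_eq_square field_simps)
  then have "v $ a = 1 / sqrt 2 \<or> v $ a = - (1 / sqrt 2)"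
    using power2_eq_iff by blast
  then show ?thesis
  proof
    assume h: "v $ a = 1 / sqrt 2"
    have "v = root_vec a b"
      unfolding vec_eq_iff
    proof
      fix i show "v $ i = root_vec a b $ i"
        using h vb vi[of i] ab by (cases "i = a"; cases "i = b"; simp add: root_vec_comp)
    qed
    then show ?thesis unfolding RS_def using ab by blast
  next
    assume h: "v $ a = - (1 / sqrt 2)"
    have "v = root_vec b a"
      unfolding vec_eq_iff
    proof
      fix i show "v $ i = root_vec b a $ i"
        using h vb vi[of i] ab by (cases "i = a"; cases "i = b"; simp add: root_vec_comp)
    qed
    then show ?thesis unfolding RS_def using ab by blast
  qed
qed

lemma refl_group_comp:
  assumes "g \<in> refl_group F" "h \<in> refl_group F" shows "g \<circ> h \<in> refl_group F"
  using assms(1)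
proof (induction g rule: refl_group.induct)
  case id_in then show ?case using assms(2) by simp
next
  case (step f g)
  have "reflection_along f \<circ> (g \<circ> h) \<in> refl_group F"
    by (rule refl_group.step[OF step.hyps(1) step.IH])
  then show ?case by (metis comp_assoc)
qed

lemma refl_in_group: "f \<in> F \<Longrightarrow> reflection_along f \<in> refl_group F"
  using refl_group.step[OF _ refl_group.id_in] by simp

lemma permv_comp: "permv \<tau> \<circ> permv \<sigma> = permv (\<sigma> \<circ> \<tau>)"
  by (simp add: fun_eq_iff permv_def)

lemma permv_id: "permv id = id"
  by (simp add: fun_eq_iff permv_def vec_eq_iff)

lemma refl_group_sub_weyl:
  assumes "F \<subseteq> RS"
  shows "refl_group F \<subseteq> weyl_A"
proof
  fix g assume "g \<in> refl_group F"
  then show "g \<in> weyl_A"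
  proof (induction g rule: refl_group.induct)
    case id_in
    have "id = permv (id :: 'a \<Rightarrow> 'a)" by (simp add: permv_id)
    moreover have "(id :: 'a \<Rightarrow> 'a) permutes UNIV" by (rule permutes_id)
    ultimately show ?case unfolding weyl_A_def permv_def[abs_def] by blast
  next
    case (step f g)
    obtain \<sigma> where s: "\<sigma> permutes UNIV" "g = permv \<sigma>"
      using step.IH unfolding weyl_A_def permv_def[abs_def] by blast
    obtain a b where ab: "a \<noteq> b" "f = root_vec a b" using step.hyps assms unfolding RS_def by blast
    have "reflection_along f \<circ> g = permv (\<sigma> \<circ> Transposition.transpose a b)"
      using ab s by (simp add: refl_root_vec permv_comp)
    moreover have "(\<sigma> \<circ> Transposition.transpose a b) permutes UNIV"
      using s(1) by (simp add: permutes_compose permutes_swap_id)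
    ultimately show ?case unfolding weyl_A_def permv_def[abs_def] by blast
  qed
qed

lemma weyl_sub_refl_group:
  fixes G :: "(real^'i::finite) set"
  assumes E: "\<And>c d. T c d \<Longrightarrow> c \<noteq> d \<Longrightarrow> root_vec c d \<in> G"
    and conn: "\<And>u v. T\<^sup>*\<^sup>* u v"
  shows "weyl_A \<subseteq> refl_group G"
proof -
  have tr: "permv (Transposition.transpose a d) \<in> refl_group G" if "a \<noteq> d" for a d :: 'i
  proof -
    have "a = d \<or> permv (Transposition.transpose a d) \<in> refl_group G"
      using conn[of a d]
    proof (induction d rule: rtranclp_induct)
      case base then show ?case by simp
    next
      case (step c d)
      show ?case
      proof (cases "d = a")
        case True then show ?thesis by simp
      next
        case dna: False
        show ?thesis
        proof (cases "c = a")
          case True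
          then have "root_vec a d \<in> G" using E step.hyps(2) dna by auto
          then have "reflection_along (root_vec a d) \<in> refl_group G" by (rule refl_in_group)
          then show ?thesis using dna by (simp add: refl_root_vec)
        next
          case cna: False
          show ?thesis
          proof (cases "c = d")
            case True then show ?thesis using step.IH by simp
          next
            case cnd: False
            have r: "permv (Transposition.transpose c d) \<in> refl_group G"
              using E[OF step.hyps(2) cnd] refl_in_group refl_root_vec[OF cnd] by metis
            have ac: "permv (Transposition.transpose a c) \<in> refl_group G"
              using step.IH cna by simp
            have "Transposition.transpose d c \<circ> Transposition.transpose c a \<circ> Transposition.transpose d c
                 = Transposition.transpose d a"
              using dna cna by (intro transpose_comp_triple) auto
            then have "Transposition.transpose c d \<circ> Transposition.transpose a c \<circ> Transposition.transpose c d
                 = Transposition.transpose a d"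
              by (simp add: transpose_commute)
            then have "permv (Transposition.transpose a d) =
               permv (Transposition.transpose c d) \<circ> (permv (Transposition.transpose a c) \<circ>
                 permv (Transposition.transpose c d))"
              by (metis permv_comp comp_assoc)
            then show ?thesis using r ac refl_group_comp by metis
          qed
        qed
      qed
    qed
    then show ?thesis using that by simp
  qed
  show ?thesis
  proof
    fix g :: "real^'i \<Rightarrow> real^'i" assume "g \<in> weyl_A"
    then obtain \<sigma> where s: "\<sigma> permutes (UNIV :: 'i set)" "g = permv \<sigma>"
      unfolding weyl_A_def permv_def[abs_def] by blast
    have "permv \<sigma> \<in> refl_group G"
      using s(1) finite_class.finite_UNIV
    proof (induction rule: permutes_induct)
      case id
      have "permv (\<lambda>x::'i. x) = (\<lambda>x. x)" using permv_id by (simp add: id_def)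
      then show ?case using refl_group.id_in[of G] by (simp add: id_def)
    next
      case (swap a b p)
      have "permv (Transposition.transpose a b \<circ> p) = permv p \<circ> permv (Transposition.transpose a b)"
        by (simp add: permv_comp)
      then show ?case using swap tr refl_group_comp by metis
    qed
    then show "g \<in> refl_group G" using s by simp
  qed
qed

lemma refl_group_conj:
  fixes M :: "real^'i::finite \<Rightarrow> real^'i"
  assumes M: "orthogonal_transformation M" and g: "g \<in> refl_group G"
  shows "M \<circ> g \<circ> inv M \<in> refl_group (M ` G)"
  using g
proof (induction g rule: refl_group.induct)
  case id_in
  have "surj M" using M orthogonal_transformation_surj by blast
  then have "M \<circ> id \<circ> inv M = id" by (simp add: surj_iff)
  then show ?case using refl_group.id_in by metis
next
  case (step f g)
  have "inj M" using M orthogonal_transformation_inj by blast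
  then have "M \<circ> (reflection_along f \<circ> g) \<circ> inv M = (M \<circ> reflection_along f \<circ> inv M) \<circ> (M \<circ> g \<circ> inv M)"
    by (simp add: fun_eq_iff inv_f_f)
  also have "\<dots> = reflection_along (M f) \<circ> (M \<circ> g \<circ> inv M)"
    using refl_conj[OF M] by simp
  finally have e: "M \<circ> (reflection_along f \<circ> g) \<circ> inv M = reflection_along (M f) \<circ> (M \<circ> g \<circ> inv M)" .
  have "M f \<in> M ` G" using step.hyps(1) by blast
  from refl_group.step[OF this step.IH] show ?case unfolding e .
qed

definition onev :: "real^'i::finite" where "onev = (\<chi> i. 1)"

lemma hyperplaneV_eq: "hyperplaneV = {x. onev \<bullet> x = 0}"
  by (simp add: hyperplaneV_def onev_def inner_vec_def)

lemma onev_ne: "(onev :: real^'i::finite) \<noteq> 0"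
  by (simp add: onev_def vec_eq_iff)

lemma dim_hyperplaneV: "dim (hyperplaneV :: (real^'i::finite) set) = CARD('i) - 1"
  unfolding hyperplaneV_eq using dim_hyperplane[OF onev_ne] by simp

lemma span_B_V:
  fixes B :: "(real^'i::finite) set"
  assumes "independent B" "card B = CARD('i) - 1" "B \<subseteq> hyperplaneV"
  shows "hyperplaneV \<subseteq> span B"
  using card_ge_dim_independent[OF assms(3,1)] assms(2) by (simp add: dim_hyperplaneV)

lemma graph_of_root: "graph_of G i j \<Longrightarrow> root_vec i j \<in> G"
  by (simp add: graph_of_def)

lemma sym_set_neg: "(x :: real^'i::finite) \<in> B \<union> uminus ` B \<Longrightarrow> - x \<in> B \<union> uminus ` B"
  by (auto simp: image_iff)

lemma tree_of_roots:
  fixes B :: "(real^'i::finite) set"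
  assumes indep: "independent B" and card: "card B = CARD('i) - 1"
    and BV: "B \<subseteq> hyperplaneV" and GR: "B \<union> uminus ` B \<subseteq> RS"
  shows "is_tree (graph_of (B \<union> uminus ` B))"
proof -
  define G where "G = B \<union> uminus ` B"
  define T where "T = graph_of G"
  have spanV: "hyperplaneV \<subseteq> span B" using span_B_V[OF indep card BV] .
  have symT: "T j i" if "T i j" for i j
  proof -
    have "root_vec i j \<in> G" "i \<noteq> j" using that by (auto simp: T_def graph_of_def)
    have "- root_vec i j \<in> G" using \<open>root_vec i j \<in> G\<close> unfolding G_def by (rule sym_set_neg)
    then show ?thesis using \<open>i \<noteq> j\<close> by (simp add: T_def graph_of_def root_vec_neg)
  qed
  have Gedge: "\<exists>i j. i \<noteq> j \<and> g = root_vec i j \<and> T i j" if "g \<in> G" for g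
  proof -
    have "g \<in> RS" using GR that unfolding G_def by (rule subsetD)
    then obtain i j where "i \<noteq> j" "g = root_vec i j" unfolding RS_def by blast
    then show ?thesis using that by (auto simp: T_def graph_of_def)
  qed
  have conn: "T\<^sup>*\<^sup>* u w" for u w
  proof (rule ccontr)
    assume nc: "\<not> T\<^sup>*\<^sup>* u w"
    define x :: "real^'i" where "x = (\<chi> c. if T\<^sup>*\<^sup>* u c then 1 else 0)"
    have orth: "orthogonal x b" if "b \<in> B" for b
    proof -
      have "b \<in> G" using that by (simp add: G_def)
      then obtain i j where ij: "i \<noteq> j" "b = root_vec i j" "T i j" using Gedge by blast
      have "T\<^sup>*\<^sup>* u i \<longleftrightarrow> T\<^sup>*\<^sup>* u j"
        using ij(3) symT[OF ij(3)] by (meson rtranclp.rtrancl_into_rtrancl)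
      then have "x $ i = x $ j" by (simp add: x_def)
      then show ?thesis by (simp add: orthogonal_def ij inner_root_vec)
    qed
    have "root_vec u w \<in> span B" using spanV root_vec_hyp by blast
    then have "orthogonal x (root_vec u w)" using orth orthogonal_to_span by blast
    moreover have "x \<bullet> root_vec u w \<noteq> 0" using nc by (simp add: inner_root_vec x_def)
    ultimately show False by (simp add: orthogonal_def)
  qed
  have acyc: "\<not> has_cycle T"
  proof
    assume "has_cycle T"
    then obtain cs where cs: "length cs \<ge> 3" "distinct cs"
      "\<And>k. Suc k < length cs \<Longrightarrow> T (cs ! k) (cs ! Suc k)" "T (last cs) (hd cs)"
      unfolding has_cycle_def by blast
    define m where "m = length cs"
    define r where "r k = root_vec (cs ! k) (cs ! Suc k)" for k
    define rl where "rl = root_vec (cs ! (m - 1)) (cs ! 0)"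
    have m3: "m \<ge> 3" using cs(1) m_def by simp
    have ne: "cs \<noteq> []" using m3 m_def by auto
    have hd: "hd cs = cs ! 0" and lst: "last cs = cs ! (m - 1)"
      using hd_conv_nth[OF ne] last_conv_nth[OF ne] m_def by auto
    have rG: "r k \<in> G" if "Suc k < m" for k
      using cs(3)[of k] that m_def by (simp add: r_def T_def graph_of_def)
    have rlG: "rl \<in> G" using cs(4) hd lst by (simp add: rl_def T_def graph_of_def)
    have dist: "cs ! k = cs ! l \<longleftrightarrow> k = l" if "k < m" "l < m" for k l
      using cs(2) that m_def by (simp add: nth_eq_iff_index_eq)
    have sumz: "(\<Sum>k<m - 1. r k) + rl = 0"
    proof -
      have "(\<Sum>k<m - 1. r k) = (1 / sqrt 2) *\<^sub>R (\<Sum>k<m - 1. axis (cs ! k) 1 - axis (cs ! Suc k) 1)"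
        by (simp add: r_def root_vec_def scaleR_sum_right)
      also have "\<dots> = (1 / sqrt 2) *\<^sub>R (axis (cs ! 0) 1 - axis (cs ! (m - 1)) 1)"
        using sum_lessThan_telescope'[of "\<lambda>k. axis (cs ! k) (1::real)" "m - 1"] by simp
      finally show ?thesis by (simp add: rl_def root_vec_def algebra_simps)
    qed
    have split: "(\<Sum>k<m - 1. r k) = r 0 + (\<Sum>k\<in>{1..<m - 1}. r k)"
    proof -
      have "(\<Sum>k<m - 1. r k) = (\<Sum>k\<in>{0..<m - 1}. r k)" by (simp add: lessThan_atLeast0)
      also have "\<dots> = r 0 + (\<Sum>k\<in>{Suc 0..<m - 1}. r k)"
        using m3 by (subst sum.atLeast_Suc_lessThan) auto
      finally show ?thesis by simp
    qed
    have r0: "r 0 = - ((\<Sum>k\<in>{1..<m - 1}. r k) + rl)"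
      using sumz split by (simp add: algebra_simps eq_neg_iff_add_eq_0)
    obtain b0 where b0: "b0 \<in> B" "b0 = r 0 \<or> b0 = - r 0"
    proof -
      have "r 0 \<in> G" using rG m3 by simp
      then show ?thesis unfolding G_def using that by force
    qed
    have c01: "cs ! 0 \<noteq> cs ! 1" using dist[of 0 1] m3 by simp
    have notr0: "g \<noteq> r 0 \<and> g \<noteq> - r 0" if "g = r k \<and> 1 \<le> k \<and> Suc k < m \<or> g = rl" for g k
      using that
    proof
      assume h: "g = r k \<and> 1 \<le> k \<and> Suc k < m"
      have ne: "cs ! k \<noteq> cs ! Suc k" using dist[of k "Suc k"] h by simp
      have "\<not> (cs ! k = cs ! 0)" using dist[of k 0] h by simp
      moreover have "\<not> (cs ! Suc k = cs ! 0)" using dist[of "Suc k" 0] h by simp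
      ultimately show ?thesis using h ne by (simp add: r_def root_vec_eq root_vec_eq_neg)
    next
      assume h: "g = rl"
      have ne: "cs ! (m - 1) \<noteq> cs ! 0" using dist[of "m - 1" 0] m3 by simp
      have "\<not> (cs ! (m - 1) = cs ! 0)" using ne .
      moreover have "\<not> (cs ! (m - 1) = cs ! 1)" using dist[of "m - 1" 1] m3 by simp
      ultimately show ?thesis using h ne by (simp add: r_def rl_def root_vec_eq root_vec_eq_neg)
    qed
    have inspan: "g \<in> span (B - {b0})" if gG: "g \<in> G" and gn: "g \<noteq> r 0" "g \<noteq> - r 0" for g
    proof (cases "g \<in> B")
      case True
      then have "g \<in> B - {b0}" using b0(2) gn by auto
      then show ?thesis by (rule span_base)
    next
      case False
      then obtain b where b: "b \<in> B" "g = - b" using gG unfolding G_def by auto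
      then have "b \<noteq> b0" using b0(2) gn by auto
      then have "b \<in> span (B - {b0})" using b by (intro span_base) auto
      then show ?thesis using b span_neg by blast
    qed
    have "(\<Sum>k\<in>{1..<m - 1}. r k) \<in> span (B - {b0})"
    proof (rule span_sum)
      fix k assume "k \<in> {1..<m - 1}"
      then have k: "1 \<le> k" "Suc k < m" by auto
      show "r k \<in> span (B - {b0})" using inspan rG[OF k(2)] notr0[of "r k" k] k by blast
    qed
    moreover have "rl \<in> span (B - {b0})" using inspan rlG notr0[of rl 0] by blast
    ultimately have "r 0 \<in> span (B - {b0})" unfolding r0 by (intro span_neg span_add)
    then have "b0 \<in> span (B - {b0})" using b0(2) span_neg by force
    then have "dependent B" unfolding dependent_def using b0(1) by blast
    then show False using indep by simp
  qed
  have irr: "irreflp T" by (simp add: irreflp_def T_def graph_of_def)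
  have "symp T" using symT by (simp add: sympI)
  then show ?thesis using irr conn acyc unfolding is_tree_def T_def G_def by blast
qed

lemma simple_path:
  assumes "E\<^sup>*\<^sup>* u v"
  shows "\<exists>cs. cs \<noteq> [] \<and> hd cs = u \<and> last cs = v \<and> distinct cs \<and>
           (\<forall>k. Suc k < length cs \<longrightarrow> E (cs ! k) (cs ! Suc k))"
  using assms
proof (induction rule: rtranclp_induct)
  case base
  show ?case by (rule exI[of _ "[u]"]) simp
next
  case (step w v)
  then obtain cs where cs: "cs \<noteq> []" "hd cs = u" "last cs = w" "distinct cs"
    "\<And>k. Suc k < length cs \<Longrightarrow> E (cs ! k) (cs ! Suc k)" by blast
  show ?case
  proof (cases "v \<in> set cs")
    case True
    then obtain i where i: "i < length cs" "cs ! i = v" by (auto simp: in_set_conv_nth)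
    define cs' where "cs' = take (Suc i) cs"
    have "cs' \<noteq> []" using i cs(1) by (simp add: cs'_def)
    moreover have "hd cs' = u" using cs(2) by (simp add: cs'_def)
    moreover have "last cs' = v" using i by (simp add: cs'_def take_Suc_conv_app_nth)
    moreover have "distinct cs'" using cs(4) by (simp add: cs'_def)
    moreover have "\<forall>k. Suc k < length cs' \<longrightarrow> E (cs' ! k) (cs' ! Suc k)"
      using cs(5) i by (simp add: cs'_def)
    ultimately show ?thesis by blast
  next
    case False
    define cs' where "cs' = cs @ [v]"
    have "cs' \<noteq> []" by (simp add: cs'_def)
    moreover have "hd cs' = u" using cs(1,2) by (simp add: cs'_def)
    moreover have "last cs' = v" by (simp add: cs'_def)
    moreover have "distinct cs'" using cs(4) False by (simp add: cs'_def)
    moreover have "\<forall>k. Suc k < length cs' \<longrightarrow> E (cs' ! k) (cs' ! Suc k)"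
    proof (intro allI impI)
      fix k assume k: "Suc k < length cs'"
      show "E (cs' ! k) (cs' ! Suc k)"
      proof (cases "Suc k < length cs")
        case True
        then show ?thesis using cs(5)[OF True] by (simp add: cs'_def nth_append)
      next
        case False
        then have kk: "Suc k = length cs" using k by (simp add: cs'_def)
        then have "cs ! k = w" using cs(1,3) by (metis diff_Suc_1 last_conv_nth)
        then show ?thesis using kk step.hyps(2) by (simp add: cs'_def nth_append)
      qed
    qed
    ultimately show ?thesis by blast
  qed
qed

lemma vec_expand: "x = (\<Sum>c\<in>UNIV. (x $ c) *\<^sub>R axis c (1::real))"
  using basis_expansion[of x] by (simp add: scalar_mult_eq_scaleR)

lemma conn_span:
  fixes S :: "(real^'i::finite) set"
  assumes E: "\<And>c d. T c d \<Longrightarrow> c \<noteq> d \<Longrightarrow> root_vec c d \<in> span S"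
    and conn: "\<And>u v. T\<^sup>*\<^sup>* u v"
  shows "hyperplaneV \<subseteq> span S"
proof -
  have ax: "axis a 1 - axis b 1 \<in> span S" for a b :: 'i
    using conn[of a b]
  proof (induction b rule: rtranclp_induct)
    case base then show ?case by (simp add: span_zero)
  next
    case (step c d)
    have "axis c (1::real) - axis d 1 \<in> span S"
    proof (cases "c = d")
      case True then show ?thesis by (simp add: span_zero)
    next
      case False
      then show ?thesis using E[OF step.hyps(2) False] by (simp add: axis_diff_root span_scale)
    qed
    then have "(axis a 1 - axis c 1) + (axis c 1 - axis d 1) \<in> span S"
      using step.IH by (rule span_add[rotated])
    then show ?case by simp
  qed
  show ?thesis
  proof
    fix x :: "real^'i" assume x: "x \<in> hyperplaneV"
    obtain a :: 'i where True by blast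
    have "(\<Sum>c\<in>UNIV. (x $ c) *\<^sub>R (axis c 1 - axis a 1)) =
          (\<Sum>c\<in>UNIV. (x $ c) *\<^sub>R axis c (1::real)) - (\<Sum>c\<in>UNIV. x $ c) *\<^sub>R axis a 1"
      by (simp add: scaleR_diff_right sum_subtractf scaleR_sum_left)
    also have "\<dots> = x" using x vec_expand[of x] by (simp add: hyperplaneV_def)
    finally have "x = (\<Sum>c\<in>UNIV. (x $ c) *\<^sub>R (axis c 1 - axis a 1))" by simp
    moreover have "(\<Sum>c\<in>UNIV. (x $ c) *\<^sub>R (axis c 1 - axis a 1)) \<in> span S"
      by (intro span_sum span_scale ax)
    ultimately show "x \<in> span S" by simp
  qed
qed

lemma ot_id: "orthogonal_transformation (id :: real^'i::finite \<Rightarrow> real^'i)"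
  unfolding id_def by (rule orthogonal_transformation_id)

lemma isometry_id: "isometry_V (id :: real^'i::finite \<Rightarrow> real^'i)"
  by (simp add: isometry_V_def ot_id)

lemma tree_props:
  assumes "is_tree T"
  shows "\<And>i j. T i j \<Longrightarrow> T j i" "\<And>i. \<not> T i i" "\<And>u v. T\<^sup>*\<^sup>* u v" "\<not> has_cycle T"
  using assms unfolding is_tree_def by (auto dest: sympD simp: irreflp_def)

lemma tree_family:
  fixes T :: "'i::finite \<Rightarrow> 'i \<Rightarrow> bool"
  assumes tree: "is_tree T"
  shows "\<exists>F :: (real^'i) set. is_family F \<and> generates_A F \<and> corresponds F T"
proof -
  note tp = tree_props[OF tree]
  obtain ord :: "'i \<Rightarrow> nat" and n where "ord ` UNIV = {i. i < n}" "inj_on ord UNIV"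
    using finite_imp_inj_to_nat_seg[OF finite_class.finite_UNIV] by blast
  then have ordinj: "ord i = ord j \<Longrightarrow> i = j" for i j by (meson injD)
  define F :: "(real^'i) set" where "F = {root_vec i j | i j. T i j}"
  define B :: "(real^'i) set" where "B = {root_vec i j | i j. T i j \<and> ord i < ord j}"
  have inF: "root_vec x y \<in> F \<longleftrightarrow> T x y" if "x \<noteq> y" for x y
  proof
    assume "root_vec x y \<in> F"
    then obtain p q where "T p q" "root_vec x y = root_vec p q" unfolding F_def by blast
    then show "T x y" using root_vec_eq[OF that] by simp
  qed (auto simp: F_def)
  have inB: "root_vec x y \<in> B \<longleftrightarrow> T x y \<and> ord x < ord y" if "x \<noteq> y" for x y
  proof
    assume "root_vec x y \<in> B"
    then obtain p q where "T p q" "ord p < ord q" "root_vec x y = root_vec p q" unfolding B_def by blast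
    then show "T x y \<and> ord x < ord y" using root_vec_eq[OF that] by simp
  qed (auto simp: B_def)
  have FB: "F = B \<union> uminus ` B"
  proof
    show "F \<subseteq> B \<union> uminus ` B"
    proof
      fix f assume "f \<in> F"
      then obtain i j where ij: "T i j" "f = root_vec i j" unfolding F_def by blast
      have ne: "i \<noteq> j" using ij tp(2) by auto
      show "f \<in> B \<union> uminus ` B"
      proof (cases "ord i < ord j")
        case True then show ?thesis using ij unfolding B_def by blast
      next
        case False
        then have "ord j < ord i" using ordinj ne by (meson linorder_neqE_nat)
        then have "root_vec j i \<in> B" unfolding B_def using tp(1)[OF ij(1)] by blast
        moreover have "f = - root_vec j i" using ij by (simp add: root_vec_neg)
        ultimately show ?thesis by blast
      qed
    qed
  next
    show "B \<union> uminus ` B \<subseteq> F"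
    proof
      fix f assume "f \<in> B \<union> uminus ` B"
      then show "f \<in> F"
      proof
        assume "f \<in> B" then show ?thesis unfolding B_def F_def by blast
      next
        assume "f \<in> uminus ` B"
        then obtain i j where "T i j" "f = - root_vec i j" unfolding B_def by blast
        then show ?thesis unfolding F_def using tp(1) by (auto simp: root_vec_neg)
      qed
    qed
  qed
  have FRS: "F \<subseteq> RS"
  proof
    fix f assume "f \<in> F"
    then obtain i j where ij: "T i j" "f = root_vec i j" unfolding F_def by blast
    then have "i \<noteq> j" using tp(2) by auto
    then show "f \<in> RS" using ij unfolding RS_def by blast
  qed
  have BF: "B \<subseteq> F" using FB by blast
  have Bunit: "\<forall>f\<in>B. norm f = 1 \<and> f \<in> hyperplaneV"
  proof
    fix f assume "f \<in> B"
    then obtain i j where ij: "T i j" "f = root_vec i j" unfolding B_def by blast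
    then have "i \<noteq> j" using tp(2) by auto
    then show "norm f = 1 \<and> f \<in> hyperplaneV" using ij by (simp add: norm_root_vec root_vec_hyp)
  qed
  have BV: "B \<subseteq> hyperplaneV" using Bunit by blast
  have Vspan: "hyperplaneV \<subseteq> span B"
  proof (rule conn_span[OF _ tp(3)])
    fix c d assume cd: "T c d" "c \<noteq> d"
    show "root_vec c d \<in> span B"
    proof (cases "ord c < ord d")
      case True
      then have "root_vec c d \<in> B" using cd unfolding B_def by blast
      then show ?thesis by (rule span_base)
    next
      case False
      then have "ord d < ord c" using ordinj cd(2) by (meson linorder_neqE_nat)
      then have "root_vec d c \<in> B" unfolding B_def using tp(1)[OF cd(1)] by blast
      then have "- root_vec d c \<in> span B" by (intro span_neg span_base)
      then show ?thesis by (simp add: root_vec_neg)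
    qed
  qed
  obtain B' where B': "B' \<subseteq> B" "independent B'" "B \<subseteq> span B'"
    using maximal_independent_subset[of B] by blast
  have "span B \<subseteq> span B'" using B'(3) by (metis span_mono span_span)
  then have VB': "hyperplaneV \<subseteq> span B'" using Vspan by blast
  have B'V: "B' \<subseteq> hyperplaneV" using B'(1) BV by blast
  have cardB': "card B' = CARD('i) - 1"
    using basis_card_eq_dim[OF B'V VB' B'(2)] by (simp add: dim_hyperplaneV)
  have B'RS: "B' \<union> uminus ` B' \<subseteq> RS"
  proof -
    have "B' \<subseteq> RS" using B'(1) BF FRS by blast
    then show ?thesis using RS_neg by blast
  qed
  define T' where "T' = graph_of (B' \<union> uminus ` B')"
  have tree': "is_tree T'" unfolding T'_def by (rule tree_of_roots[OF B'(2) cardB' B'V B'RS])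
  have T'T: "T x y" if "T' x y" for x y
  proof -
    have xy: "x \<noteq> y" "root_vec x y \<in> B' \<union> uminus ` B'" using that by (auto simp: T'_def graph_of_def)
    have "B' \<union> uminus ` B' \<subseteq> F" using B'(1) FB by blast
    then show ?thesis using xy inF by blast
  qed
  have BB': "B \<subseteq> B'"
  proof
    fix b assume bB: "b \<in> B"
    show "b \<in> B'"
    proof (rule ccontr)
      assume nb: "b \<notin> B'"
      obtain i j where ij: "T i j" "ord i < ord j" "b = root_vec i j" using bB unfolding B_def by blast
      have ne: "i \<noteq> j" using ij by auto
      obtain cs where cs: "cs \<noteq> []" "hd cs = j" "last cs = i" "distinct cs"
        "\<And>k. Suc k < length cs \<Longrightarrow> T' (cs ! k) (cs ! Suc k)"
        using simple_path[OF tree_props(3)[OF tree', of j i]] by blast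
      have l2: "length cs \<ge> 2"
      proof (rule ccontr)
        assume "\<not> length cs \<ge> 2"
        moreover have "length cs \<noteq> 0" using cs(1) by simp
        ultimately have "length cs = 1" by linarith
        then obtain a where "cs = [a]" by (metis One_nat_def length_0_conv length_Suc_conv)
        then have "hd cs = last cs" by simp
        then show False using cs ne by simp
      qed
      show False
      proof (cases "length cs = 2")
        case True
        have "cs ! 0 = j" using cs(1,2) by (simp add: hd_conv_nth)
        moreover have "cs ! 1 = i" using cs(1,3) True by (simp add: last_conv_nth)
        ultimately have "T' j i" using cs(5)[of 0] True by simp
        then have "root_vec j i \<in> B' \<union> uminus ` B'" by (simp add: T'_def graph_of_def)
        then show False
        proof
          assume "root_vec j i \<in> B'"
          then have "root_vec j i \<in> B" using B'(1) by blast
          then have "ord j < ord i" using inB ne by simp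
          then show False using ij(2) by simp
        next
          assume "root_vec j i \<in> uminus ` B'"
          then obtain b' where "b' \<in> B'" "root_vec j i = - b'" by blast
          then have "b' = - root_vec j i" by simp
          then have "b' = root_vec i j" by (simp add: root_vec_neg)
          then show False using \<open>b' \<in> B'\<close> nb ij(3) by simp
        qed
      next
        case False
        then have l3: "length cs \<ge> 3" using l2 by simp
        have "has_cycle T"
          unfolding has_cycle_def
        proof (intro exI conjI allI impI)
          show "3 \<le> length cs" by (rule l3)
          show "distinct cs" by (rule cs(4))
          fix k assume "Suc k < length cs"
          then show "T (cs ! k) (cs ! Suc k)" using cs(5) T'T by blast
        next
          show "T (last cs) (hd cs)" using cs(2,3) ij(1) by simp
        qed
        then show False using tp(4) by simp
      qed
    qed
  qed
  have BeqB': "B = B'" using BB' B'(1) by blast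
  have fam: "is_family F"
    unfolding is_family_def using B'(2) cardB' Bunit FB BeqB' by blast
  have rr: "root_realized F" unfolding root_realized_def using FRS by (simp add: RS_def)
  have gT: "graph_of F = T"
  proof (intro ext)
    fix x y show "graph_of F x y = T x y"
      using inF tp(2) by (cases "x = y") (auto simp: graph_of_def)
  qed
  have corr: "corresponds F T"
    unfolding corresponds_def
  proof (intro exI[of _ id] conjI)
    show "isometry_V (id :: real^'i \<Rightarrow> real^'i)" by (rule isometry_id)
    show "root_realized (id ` F)" using rr by simp
    show "T = graph_of (id ` F)" using gT by simp
  qed
  have rg: "refl_group F = weyl_A"
  proof
    show "refl_group F \<subseteq> weyl_A" by (rule refl_group_sub_weyl[OF FRS])
    show "weyl_A \<subseteq> refl_group F"
    proof (rule weyl_sub_refl_group[OF _ tp(3)])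
      fix c d assume "T c d" "c \<noteq> d" then show "root_vec c d \<in> F" using inF by blast
    qed
  qed
  have "(\<lambda>g. id \<circ> g \<circ> inv id) ` refl_group F = weyl_A" using rg by simp
  then have gen: "generates_A F" unfolding generates_A_def using isometry_id by blast
  show ?thesis using fam gen corr by blast
qed

definition pv :: "'i::finite \<Rightarrow> real^'i" where
  "pv a = axis a 1 - (1 / real CARD('i)) *\<^sub>R onev"

lemma pv_comp: "pv a $ c = (if c = a then 1 else 0) - 1 / real CARD('i::finite)"
  for a :: "'i::finite"
  by (simp add: pv_def onev_def axis_def)

lemma pv_V: "pv a \<in> hyperplaneV"
proof -
  have "(\<Sum>c\<in>UNIV. pv a $ c) = (\<Sum>c\<in>UNIV. (if c = a then 1 else 0)) - (\<Sum>c\<in>(UNIV::'a set). 1 / real CARD('a))"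
    by (simp add: pv_comp sum_subtractf)
  also have "\<dots> = 0" by simp
  finally show ?thesis by (simp add: hyperplaneV_def)
qed

lemma char_pv:
  fixes v :: "real^'i::finite"
  assumes V: "v \<in> hyperplaneV"
    and D: "\<And>c d. v $ c - v $ d \<in> {-1, 0, 1}"
    and N: "v \<bullet> v = (real CARD('i) - 1) / real CARD('i)"
  shows "\<exists>a. v = pv a \<or> v = - pv a"
proof -
  define n where "n = real CARD('i)"
  have npos: "n > 0" by (simp add: n_def)
  define m where "m = Min (range (\<lambda>c. v $ c))"
  have "m \<in> range (\<lambda>c. v $ c)" unfolding m_def by (rule Min_in) auto
  then obtain a0 where a0: "v $ a0 = m" by auto
  have mle: "m \<le> v $ c" for c unfolding m_def by (rule Min_le) auto
  have two: "v $ c = m \<or> v $ c = m + 1" for c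
    using D[of c a0] mle[of c] a0 by auto
  define S where "S = {c. v $ c = m + 1}"
  define k where "k = real (card S)"
  have vS: "v $ c = m + (if c \<in> S then 1 else 0)" for c
    using two[of c] by (auto simp: S_def)
  have cardsum: "(\<Sum>c\<in>UNIV. (if c \<in> S then (1::real) else 0)) = k"
  proof -
    have "(\<Sum>c\<in>UNIV. (if c \<in> S then (1::real) else 0)) = (\<Sum>c\<in>UNIV \<inter> {x. x \<in> S}. 1) + (\<Sum>c\<in>UNIV \<inter> - {x. x \<in> S}. 0)"
      by (rule sum.If_cases) simp
    then show ?thesis by (simp add: k_def)
  qed
  have s0: "(\<Sum>c\<in>UNIV. v $ c) = 0" using V by (simp add: hyperplaneV_def)
  have "(\<Sum>c\<in>UNIV. v $ c) = n * m + k"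
  proof -
    have "(\<Sum>c\<in>UNIV. v $ c) = (\<Sum>c\<in>UNIV. m + (if c \<in> S then 1 else 0))"
      using vS by simp
    also have "\<dots> = n * m + k" by (simp add: sum.distrib cardsum n_def)
    finally show ?thesis .
  qed
  then have e1: "n * m + k = 0" using s0 by simp
  have "v \<bullet> v = (\<Sum>c\<in>UNIV. (v $ c) * (v $ c))" by (simp add: inner_vec_def)
  also have "\<dots> = (\<Sum>c\<in>UNIV. m * m + (if c \<in> S then 2 * m + 1 else 0))"
    by (intro sum.cong refl) (simp add: vS algebra_simps)
  also have "\<dots> = n * (m * m) + (2 * m + 1) * k"
  proof -
    have "(\<Sum>c\<in>UNIV. (if c \<in> S then 2 * m + 1 else 0)) = (\<Sum>c\<in>UNIV. (2 * m + 1) * (if c \<in> S then 1 else 0))"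
      by (intro sum.cong refl) simp
    also have "\<dots> = (2 * m + 1) * k" by (simp add: sum_distrib_left[symmetric] cardsum)
    finally show ?thesis by (simp add: sum.distrib n_def)
  qed
  finally have e2: "n * (m * m) + (2 * m + 1) * k = (n - 1) / n" using N by (simp add: n_def)
  have mk: "m = - k / n" using e1 npos by (simp add: field_simps)
  have "(k - 1) * (n - 1 - k) = 0"
  proof -
    have "n * (n * (m * m) + (2 * m + 1) * k) = n - 1" using e2 npos by (simp add: field_simps)
    moreover have "n * (n * (m * m) + (2 * m + 1) * k) = (n * m) * (n * m) + 2 * (n * m) * k + n * k"
      by (simp add: algebra_simps)
    moreover have "n * m = - k" using e1 by simp
    ultimately have "k * k - 2 * k * k + n * k = n - 1" by simp
    then show ?thesis by (simp add: algebra_simps)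
  qed
  then have "k = 1 \<or> k = n - 1" by auto
  then show ?thesis
  proof
    assume k1: "k = 1"
    then have "card S = 1" by (simp add: k_def)
    then obtain a where Sa: "S = {a}" using card_1_singletonE by blast
    have "v = pv a"
      unfolding vec_eq_iff
    proof
      fix c show "v $ c = pv a $ c"
        using vS[of c] Sa mk k1 by (simp add: pv_comp n_def)
    qed
    then show ?thesis by blast
  next
    assume kn: "k = n - 1"
    have cS: "card S = CARD('i) - 1" using kn by (simp add: k_def n_def)
    have "card (UNIV - S) = 1"
      using cS by (simp add: card_Diff_subset card_mono)
    then obtain b where Sb: "UNIV - S = {b}" using card_1_singletonE by blast
    have inS: "c \<in> S \<longleftrightarrow> c \<noteq> b" for c using Sb by blast
    have "v = - pv b"
      unfolding vec_eq_iff
    proof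
      fix c
      have "m = 1 / n - 1" using mk kn npos by (simp add: field_simps)
      then show "v $ c = (- pv b) $ c"
        using vS[of c] inS[of c] by (simp add: pv_comp n_def)
    qed
    then show ?thesis by blast
  qed
qed

lemma pv_inner_root: "pv a \<bullet> root_vec c d = ((if c = a then 1 else 0) - (if d = a then 1 else 0)) / sqrt 2"
  by (simp add: inner_root_vec pv_comp)

lemma pv_self: "pv a \<bullet> pv a = (real CARD('i) - 1) / real CARD('i)"
  for a :: "'i::finite"
proof -
  have o: "pv a \<bullet> onev = 0" using pv_V[of a] by (simp add: hyperplaneV_eq inner_commute)
  have "pv a \<bullet> pv a = pv a \<bullet> axis a 1 - (1 / real CARD('i)) * (pv a \<bullet> onev)"
    by (simp add: pv_def[of a] inner_diff_right)
  also have "\<dots> = 1 - 1 / real CARD('i)" using o by (simp add: inner_axis pv_comp)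
  also have "\<dots> = (real CARD('i) - 1) / real CARD('i)" by (simp add: field_simps)
  finally show ?thesis .
qed

lemma root_pv: "root_vec u v = (1 / sqrt 2) *\<^sub>R (pv u - pv v)"
  by (simp add: root_vec_def pv_def)

lemma pv_inj: "pv a = pv b \<Longrightarrow> a = b"
proof -
  assume "pv a = pv b"
  then have "pv a $ a = pv b $ a" by simp
  then show "a = b" by (simp add: pv_comp split: if_splits)
qed

lemma pv_neg:
  assumes "CARD('i::finite) \<ge> 3"
  shows "pv (a::'i) \<noteq> - pv b"
proof
  assume h: "pv a = - pv b"
  have "card {a, b} \<le> 2" by (simp add: card_insert_le_m1)
  then have "{a, b} \<noteq> (UNIV :: 'i set)" using assms by auto
  then obtain c where c: "c \<notin> {a, b}" by auto
  have "pv a $ c = - pv b $ c" using h by simp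
  then show False using c by (simp add: pv_comp)
qed

lemma iso_key:
  fixes M :: "real^'i::finite \<Rightarrow> real^'i"
  assumes M: "orthogonal_transformation M" and MV: "M ` hyperplaneV = hyperplaneV"
    and MR: "\<And>r. r \<in> RS \<Longrightarrow> M r \<in> RS" and N3: "CARD('i) \<ge> 3"
  shows "\<exists>\<pi> s. inj \<pi> \<and> (s = 1 \<or> s = -1) \<and> (\<forall>u v. M (root_vec u v) = s *\<^sub>R root_vec (\<pi> u) (\<pi> v))"
proof -
  define n where "n = real CARD('i)"
  have npos: "n > 0" by (simp add: n_def)
  have lin: "linear M" using M by (rule orthogonal_transformation_linear)
  have injM: "inj M" using M by (rule orthogonal_transformation_inj)
  have MRS: "M ` RS = RS"
  proof (rule card_subset_eq)
    show "finite (RS :: (real^'i) set)" by (rule RS_finite)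
    show "M ` RS \<subseteq> RS" using MR by blast
    show "card (M ` RS) = card (RS :: (real^'i) set)"
      using injM by (simp add: card_image inj_on_subset)
  qed
  have ex: "\<exists>bs. (snd bs = (1::real) \<or> snd bs = -1) \<and> M (pv a) = snd bs *\<^sub>R pv (fst bs)" for a :: 'i
  proof -
    define v where "v = M (pv a)"
    have vV: "v \<in> hyperplaneV" unfolding v_def using MV pv_V by blast
    have vv: "v \<bullet> v = (real CARD('i) - 1) / real CARD('i)"
      unfolding v_def ot_inner[OF M] by (rule pv_self)
    have D: "v $ c - v $ d \<in> {-1, 0, 1}" for c d
    proof (cases "c = d")
      case True then show ?thesis by simp
    next
      case False
      then have "root_vec c d \<in> RS" unfolding RS_def by blast
      then have "root_vec c d \<in> M ` RS" using MRS by simp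
      then obtain r' where r': "r' \<in> RS" "root_vec c d = M r'" by blast
      then obtain c' d' where cd': "r' = root_vec c' d'" unfolding RS_def by blast
      have "v \<bullet> root_vec c d = pv a \<bullet> r'" unfolding v_def r'(2) ot_inner[OF M] ..
      then have "(v $ c - v $ d) / sqrt 2 = ((if c' = a then 1 else 0) - (if d' = a then 1 else 0)) / sqrt 2"
        unfolding cd' inner_root_vec by (simp add: pv_comp)
      then have "v $ c - v $ d = (if c' = a then 1 else 0) - (if d' = a then 1 else 0)"
        by simp
      then show ?thesis by auto
    qed
    obtain b where "v = pv b \<or> v = - pv b" using char_pv[OF vV D vv] by blast
    then show ?thesis
    proof
      assume "v = pv b" then show ?thesis unfolding v_def by (intro exI[of _ "(b, 1)"]) simp
    next
      assume "v = - pv b" then show ?thesis unfolding v_def by (intro exI[of _ "(b, -1)"]) simp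
    qed
  qed
  then obtain f where f: "\<And>a. (snd (f a) = (1::real) \<or> snd (f a) = -1) \<and> M (pv a) = snd (f a) *\<^sub>R pv (fst (f a))"
    using choice[of "\<lambda>a bs. (snd bs = (1::real) \<or> snd bs = -1) \<and> M (pv a) = snd bs *\<^sub>R pv (fst bs)"] by blast
  define \<pi> where "\<pi> a = fst (f a)" for a
  define s where "s a = snd (f a)" for a
  have s: "s a = 1 \<or> s a = -1" for a using f[of a] by (simp add: s_def)
  have Mp: "M (pv a) = s a *\<^sub>R pv (\<pi> a)" for a using f[of a] by (simp add: s_def \<pi>_def)
  have injpi: "inj \<pi>"
  proof (rule injI)
    fix a b assume ab: "\<pi> a = \<pi> b"
    show "a = b"
    proof (cases "s a = s b")
      case True
      then have "M (pv a) = M (pv b)" using Mp[of a] Mp[of b] ab by simp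
      then have "pv a = pv b" using injM by (simp add: inj_eq)
      then show ?thesis by (rule pv_inj)
    next
      case False
      then have "s a = - s b" using s[of a] s[of b] by auto
      then have "M (pv a) = - M (pv b)" using Mp[of a] Mp[of b] ab by simp
      also have "\<dots> = M (- pv b)" using lin by (simp add: linear_neg)
      finally have "pv a = - pv b" using injM by (simp add: inj_eq)
      then show ?thesis using pv_neg[OF N3] by blast
    qed
  qed
  have surjpi: "surj \<pi>" using injpi finite_UNIV_inj_surj[OF finite_class.finite_UNIV] by blast
  define t where "t c = s (inv \<pi> c)" for c
  have sumpv: "(\<Sum>a\<in>UNIV. pv a) = (0 :: real^'i)"
  proof -
    have "(\<Sum>a\<in>UNIV. pv a $ d) = 0" for d :: 'i
    proof -
      have "(\<Sum>a\<in>UNIV. pv a $ d) = (\<Sum>a\<in>UNIV. (if d = a then 1 else 0)) - (\<Sum>a\<in>(UNIV::'i set). 1 / n)"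
        by (simp add: pv_comp sum_subtractf n_def)
      also have "\<dots> = 0" using npos by (simp add: n_def)
      finally show ?thesis .
    qed
    then show ?thesis by (simp add: vec_eq_iff)
  qed
  have "(\<Sum>a\<in>UNIV. s a *\<^sub>R pv (\<pi> a)) = M (\<Sum>a\<in>UNIV. pv a)"
    using lin by (simp add: linear_sum Mp)
  also have "\<dots> = 0" using sumpv lin by (simp add: linear_0)
  finally have z1: "(\<Sum>a\<in>UNIV. s a *\<^sub>R pv (\<pi> a)) = 0" .
  have "(\<Sum>c\<in>UNIV. t c *\<^sub>R pv c) = (\<Sum>c\<in>\<pi> ` UNIV. t c *\<^sub>R pv c)" using surjpi by simp
  also have "\<dots> = (\<Sum>a\<in>UNIV. t (\<pi> a) *\<^sub>R pv (\<pi> a))"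
    using injpi by (simp add: sum.reindex)
  also have "\<dots> = (\<Sum>a\<in>UNIV. s a *\<^sub>R pv (\<pi> a))"
    using injpi by (simp add: t_def inv_f_f)
  finally have z2: "(\<Sum>c\<in>UNIV. t c *\<^sub>R pv c) = 0" using z1 by simp
  have tc: "t d = (\<Sum>c\<in>UNIV. t c) / n" for d
  proof -
    have "(\<Sum>c\<in>UNIV. t c * pv c $ d) = 0" using arg_cong[OF z2, of "\<lambda>x. x $ d"] by simp
    moreover have "(\<Sum>c\<in>UNIV. t c * pv c $ d) = (\<Sum>c\<in>UNIV. (if d = c then t c else 0) - t c / n)"
      by (intro sum.cong refl) (auto simp: pv_comp n_def algebra_simps)
    moreover have "(\<Sum>c\<in>UNIV. (if d = c then t c else 0) - t c / n) = (\<Sum>c\<in>UNIV. (if d = c then t c else 0)) - (\<Sum>c\<in>UNIV. t c / n)"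
      by (rule sum_subtractf)
    moreover have "(\<Sum>c\<in>UNIV. (if d = c then t c else 0)) = t d" by simp
    moreover have "(\<Sum>c\<in>UNIV. t c / n) = (\<Sum>c\<in>UNIV. t c) / n" by (simp add: sum_divide_distrib)
    ultimately show ?thesis by simp
  qed
  obtain a0 :: 'i where True by blast
  define \<sigma> where "\<sigma> = s a0"
  have sc: "s a = \<sigma>" for a
  proof -
    have "s a = t (\<pi> a)" using injpi by (simp add: t_def inv_f_f)
    moreover have "s a0 = t (\<pi> a0)" using injpi by (simp add: t_def inv_f_f)
    ultimately show ?thesis using tc[of "\<pi> a"] tc[of "\<pi> a0"] by (simp add: \<sigma>_def)
  qed
  have "M (root_vec u v) = \<sigma> *\<^sub>R root_vec (\<pi> u) (\<pi> v)" for u v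
  proof -
    have "M (root_vec u v) = (1 / sqrt 2) *\<^sub>R (M (pv u) - M (pv v))"
      using lin by (simp add: root_pv linear_scale linear_diff)
    also have "\<dots> = \<sigma> *\<^sub>R root_vec (\<pi> u) (\<pi> v)"
      by (simp add: Mp sc root_pv scaleR_diff_right)
    finally show ?thesis .
  qed
  moreover have "\<sigma> = 1 \<or> \<sigma> = -1" using s[of a0] by (simp add: \<sigma>_def)
  ultimately show ?thesis using injpi by blast
qed

lemma iso_comp: "isometry_V P \<Longrightarrow> isometry_V Q \<Longrightarrow> isometry_V (P \<circ> Q)"
  unfolding isometry_V_def by (metis image_comp orthogonal_transformation_compose)

lemma iso_inv:
  fixes Q :: "real^'i::finite \<Rightarrow> real^'i"
  assumes "isometry_V Q" shows "isometry_V (inv Q)"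
proof -
  have ot: "orthogonal_transformation Q" and QV: "Q ` hyperplaneV = hyperplaneV"
    using assms by (auto simp: isometry_V_def)
  have "inj Q" using ot by (rule orthogonal_transformation_inj)
  then have "inv Q ` hyperplaneV = hyperplaneV" using image_inv_f_f[of Q hyperplaneV] QV by simp
  then show ?thesis using orthogonal_transformation_inv[OF ot] by (simp add: isometry_V_def)
qed

lemma sum_permv:
  assumes "\<sigma> permutes (UNIV :: 'i::finite set)"
  shows "(\<Sum>i\<in>UNIV. g (\<sigma> i)) = (\<Sum>i\<in>UNIV. g i)"
proof -
  have "inj \<sigma>" using assms by (rule permutes_inj)
  then have "(\<Sum>i\<in>\<sigma> ` UNIV. g i) = (\<Sum>i\<in>UNIV. g (\<sigma> i))" by (simp add: sum.reindex)
  then show ?thesis using permutes_image[OF assms] by simp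
qed

lemma iso_permv:
  assumes s: "\<sigma> permutes (UNIV :: 'i::finite set)"
  shows "isometry_V (permv \<sigma> :: real^'i \<Rightarrow> real^'i)"
proof -
  have lin: "linear (permv \<sigma> :: real^'i \<Rightarrow> real^'i)"
    by (rule linearI) (simp_all add: permv_def vec_eq_iff)
  have inn: "permv \<sigma> x \<bullet> permv \<sigma> y = x \<bullet> y" for x y :: "real^'i"
    using sum_permv[OF s, of "\<lambda>i. x $ i * y $ i"] by (simp add: inner_vec_def permv_def)
  have ot: "orthogonal_transformation (permv \<sigma> :: real^'i \<Rightarrow> real^'i)"
    using lin inn by (simp add: orthogonal_transformation_def)
  have pV: "permv \<tau> x \<in> hyperplaneV \<longleftrightarrow> x \<in> hyperplaneV" if "\<tau> permutes (UNIV :: 'i set)" for \<tau> and x :: "real^'i"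
    using sum_permv[OF that, of "\<lambda>i. x $ i"] by (simp add: hyperplaneV_def permv_def)
  have "permv \<sigma> ` hyperplaneV = (hyperplaneV :: (real^'i) set)"
  proof
    show "permv \<sigma> ` hyperplaneV \<subseteq> (hyperplaneV :: (real^'i) set)" using pV[OF s] by blast
    show "(hyperplaneV :: (real^'i) set) \<subseteq> permv \<sigma> ` hyperplaneV"
    proof
      fix x :: "real^'i" assume x: "x \<in> hyperplaneV"
      have si: "inv \<sigma> permutes UNIV" using s by (rule permutes_inv)
      have "permv \<sigma> (permv (inv \<sigma>) x) = permv (inv \<sigma> \<circ> \<sigma>) x"
        using permv_comp[of \<sigma> "inv \<sigma>"] by (metis comp_apply)
      also have "\<dots> = x" using permutes_inv_o(2)[OF s] by (simp add: permv_def)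
      finally have "x = permv \<sigma> (permv (inv \<sigma>) x)" by simp
      moreover have "permv (inv \<sigma>) x \<in> hyperplaneV" using pV[OF si] x by simp
      ultimately show "x \<in> permv \<sigma> ` hyperplaneV" by blast
    qed
  qed
  then show ?thesis using ot by (simp add: isometry_V_def)
qed

lemma family_norm: "is_family F \<Longrightarrow> f \<in> F \<Longrightarrow> norm f = 1"
  unfolding is_family_def by auto

lemma family_neg:
  assumes "is_family F" "linear Q" "x \<in> Q ` F"
  shows "- x \<in> Q ` F"
proof -
  obtain B where F: "F = B \<union> uminus ` B" using assms(1) unfolding is_family_def by blast
  obtain f where f: "f \<in> F" "x = Q f" using assms(3) by blast
  have "- f \<in> F" using f(1) unfolding F by (rule sym_set_neg)
  moreover have "- x = Q (- f)" using f(2) assms(2) by (simp add: linear_neg)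
  ultimately show ?thesis by blast
qed

lemma part1:
  fixes F :: "(real^'i::finite) set"
  assumes fam: "is_family F" and gen: "generates_A F"
  shows "\<exists>Q. isometry_V Q \<and> Q ` F \<subseteq> RS"
proof -
  obtain Q where Q: "isometry_V Q" "(\<lambda>g. Q \<circ> g \<circ> inv Q) ` refl_group F = weyl_A"
    using gen unfolding generates_A_def by blast
  have ot: "orthogonal_transformation Q" using Q(1) by (simp add: isometry_V_def)
  have "Q f \<in> RS" if f: "f \<in> F" for f
  proof -
    have "reflection_along f \<in> refl_group F" using f by (rule refl_in_group)
    then have "Q \<circ> reflection_along f \<circ> inv Q \<in> weyl_A" using Q(2) by blast
    then have "reflection_along (Q f) \<in> weyl_A" using refl_conj[OF ot] by simp
    then obtain \<sigma> where s: "\<sigma> permutes (UNIV :: 'i set)" "reflection_along (Q f) = permv \<sigma>"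
      unfolding weyl_A_def permv_def[abs_def] by blast
    have "norm (Q f) = 1" using family_norm[OF fam f] orthogonal_transformation_norm[OF ot] by simp
    then show ?thesis using permv_refl_root[OF s(1) s(2)[symmetric]] by simp
  qed
  then show ?thesis using Q(1) by blast
qed

lemma part2:
  fixes F :: "(real^'i::finite) set"
  assumes fam: "is_family F" and cor: "corresponds F T"
  shows "is_tree T"
proof -
  obtain Q where Q: "isometry_V Q" "root_realized (Q ` F)" "T = graph_of (Q ` F)"
    using cor unfolding corresponds_def by blast
  obtain B where B: "independent B" "card B = CARD('i) - 1" "\<forall>f\<in>B. norm f = 1 \<and> f \<in> hyperplaneV"
    "F = B \<union> uminus ` B" using fam unfolding is_family_def by blast
  have ot: "orthogonal_transformation Q" and QV: "Q ` hyperplaneV = hyperplaneV"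
    using Q(1) by (auto simp: isometry_V_def)
  have lin: "linear Q" using ot by (rule orthogonal_transformation_linear)
  have inj: "inj Q" using ot by (rule orthogonal_transformation_inj)
  have QF: "Q ` F = Q ` B \<union> uminus ` (Q ` B)"
    unfolding B(4) image_Un image_comp using lin by (auto simp: linear_neg)
  have ind: "independent (Q ` B)"
    by (rule linear_independent_injective_image[OF lin B(1)]) (rule inj_on_subset[OF inj subset_UNIV])
  have card: "card (Q ` B) = CARD('i) - 1" using B(2) inj by (simp add: card_image inj_on_subset)
  have QBV: "Q ` B \<subseteq> hyperplaneV" using B(3) QV by blast
  have RS: "Q ` B \<union> uminus ` (Q ` B) \<subseteq> RS"
    using Q(2) unfolding QF root_realized_def RS_def .
  show ?thesis using tree_of_roots[OF ind card QBV RS] Q(3) QF by simp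
qed

lemma RS_maps:
  fixes M :: "real^'i::finite \<Rightarrow> real^'i"
  assumes ot: "orthogonal_transformation M" and GRS: "G \<subseteq> RS"
    and conn: "\<And>u v. (graph_of G)\<^sup>*\<^sup>* u v" and G'RS: "G' \<subseteq> RS" and MG: "M ` G = G'"
    and r: "r \<in> RS"
  shows "M r \<in> RS"
proof -
  obtain a b where ab: "a \<noteq> b" "r = root_vec a b" using r unfolding RS_def by blast
  have "(Transposition.transpose a b) permutes (UNIV :: 'i set)" by (rule permutes_swap_id) auto
  then have "permv (Transposition.transpose a b) \<in> weyl_A"
    unfolding weyl_A_def permv_def[abs_def] by blast
  moreover have "weyl_A \<subseteq> refl_group G"
    by (rule weyl_sub_refl_group[OF _ conn]) (rule graph_of_root)
  moreover have "reflection_along r = permv (Transposition.transpose a b)"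
    using refl_root_vec[OF ab(1)] ab(2) by simp
  ultimately have "reflection_along r \<in> refl_group G" by auto
  then have "M \<circ> reflection_along r \<circ> inv M \<in> refl_group G'"
    using refl_group_conj[OF ot] MG by blast
  then have "reflection_along (M r) \<in> weyl_A"
    using refl_group_sub_weyl[OF G'RS] refl_conj[OF ot] by auto
  then obtain \<sigma> where s: "\<sigma> permutes (UNIV :: 'i set)" "reflection_along (M r) = permv \<sigma>"
    unfolding weyl_A_def permv_def[abs_def] by blast
  have "norm (M r) = 1" using ab norm_root_vec orthogonal_transformation_norm[OF ot] by simp
  then show ?thesis using permv_refl_root[OF s(1) s(2)[symmetric]] by simp
qed

lemma card2_tree:
  fixes T :: "'i::finite \<Rightarrow> 'i \<Rightarrow> bool"
  assumes c2: "CARD('i) = 2" and tree: "is_tree T"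
  shows "T u v \<longleftrightarrow> u \<noteq> v"
proof
  assume "T u v" then show "u \<noteq> v" using tree_props(2)[OF tree] by auto
next
  assume uv: "u \<noteq> v"
  obtain x y :: 'i where xy: "(UNIV :: 'i set) = {x, y}" "x \<noteq> y" using c2 card_2_iff by metis
  have two: "w = u \<or> w = v" for w
  proof -
    have m: "w \<in> {x, y}" "u \<in> {x, y}" "v \<in> {x, y}" by (simp_all add: xy(1)[symmetric])
    then show ?thesis using uv by auto
  qed
  from tree_props(3)[OF tree, of u v] show "T u v"
  proof (cases rule: converse_rtranclpE)
    case base then show ?thesis using uv by simp
  next
    case (step w)
    then have "w \<noteq> u" using tree_props(2)[OF tree] by auto
    then have "w = v" using two by auto
    then show ?thesis using step by simp
  qed
qed

lemma permv_root:
  assumes b: "bij \<pi>"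
  shows "permv (inv \<pi>) (root_vec u v) = root_vec (\<pi> u) (\<pi> v)"
proof -
  have e: "inv \<pi> i = w \<longleftrightarrow> i = \<pi> w" for i w
    using b by (metis bij_inv_eq_iff)
  show ?thesis by (simp add: vec_eq_iff permv_def root_vec_comp e)
qed

lemma part3:
  fixes F F' :: "(real^'i::finite) set"
  assumes N2: "CARD('i) \<ge> 2" and fam: "is_family F" and fam': "is_family F'"
    and cor: "corresponds F T" and cor': "corresponds F' T'"
  shows "family_isometric F F' \<longleftrightarrow> graph_iso T T'"
proof -
  obtain Q where Q: "isometry_V Q" "root_realized (Q ` F)" "T = graph_of (Q ` F)"
    using cor unfolding corresponds_def by blast
  obtain Q' where Q': "isometry_V Q'" "root_realized (Q' ` F')" "T' = graph_of (Q' ` F')"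
    using cor' unfolding corresponds_def by blast
  define G where "G = Q ` F"
  define G' where "G' = Q' ` F'"
  have GRS: "G \<subseteq> RS" using Q(2) unfolding G_def root_realized_def RS_def .
  have G'RS: "G' \<subseteq> RS" using Q'(2) unfolding G'_def root_realized_def RS_def .
  have tree: "is_tree T" by (rule part2[OF fam cor])
  have tree': "is_tree T'" by (rule part2[OF fam' cor'])
  have otQ: "orthogonal_transformation Q" using Q(1) by (simp add: isometry_V_def)
  have otQ': "orthogonal_transformation Q'" using Q'(1) by (simp add: isometry_V_def)
  have injQ: "inj Q" using otQ by (rule orthogonal_transformation_inj)
  have injQ': "inj Q'" using otQ' by (rule orthogonal_transformation_inj)
  have G'neg: "- x \<in> G'" if "x \<in> G'" for x
    using family_neg[OF fam' orthogonal_transformation_linear[OF otQ']] that unfolding G'_def by blast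
  have TG: "T = graph_of G" using Q(3) G_def by simp
  have TG': "T' = graph_of G'" using Q'(3) G'_def by simp
  show ?thesis
  proof
    assume "family_isometric F F'"
    then obtain P where P: "isometry_V P" "P ` F = F'" unfolding family_isometric_def by blast
    show "graph_iso T T'"
    proof (cases "CARD('i) = 2")
      case True
      have "T u v \<longleftrightarrow> T' (id u) (id v)" for u v
        using card2_tree[OF True tree] card2_tree[OF True tree'] by simp
      then show ?thesis unfolding graph_iso_def by blast
    next
      case False
      then have N3: "CARD('i) \<ge> 3" using N2 by simp
      define M where "M = Q' \<circ> P \<circ> inv Q"
      have isoM: "isometry_V M" unfolding M_def by (intro iso_comp iso_inv Q'(1) P(1) Q(1))
      have otM: "orthogonal_transformation M" and MV: "M ` hyperplaneV = hyperplaneV"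
        using isoM by (auto simp: isometry_V_def)
      have injM: "inj M" using otM by (rule orthogonal_transformation_inj)
      have MG: "M ` G = G'"
      proof -
        have "M ` G = Q' ` (P ` (inv Q ` (Q ` F)))" unfolding M_def G_def by (simp add: image_comp)
        also have "\<dots> = G'" using image_inv_f_f[OF injQ] P(2) G'_def by simp
        finally show ?thesis .
      qed
      have conn: "(graph_of G)\<^sup>*\<^sup>* u v" for u v using tree_props(3)[OF tree] TG by simp
      have MR: "M r \<in> RS" if "r \<in> RS" for r
        by (rule RS_maps[OF otM GRS conn G'RS MG that])
      obtain \<pi> s where ps: "inj \<pi>" "s = 1 \<or> s = -1" "\<And>u v. M (root_vec u v) = s *\<^sub>R root_vec (\<pi> u) (\<pi> v)"
        using iso_key[OF otM MV MR N3] by blast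
      have bij: "bij \<pi>" using ps(1) finite_UNIV_inj_surj[OF finite_class.finite_UNIV] by (simp add: bij_def)
      have inG: "root_vec u v \<in> G \<longleftrightarrow> M (root_vec u v) \<in> G'" for u v
        using injM MG by (metis inj_image_mem_iff)
      have sG: "s *\<^sub>R y \<in> G' \<longleftrightarrow> y \<in> G'" for y
        using ps(2) G'neg by (metis minus_minus scaleR_minus1_left scaleR_one)
      have "T u v \<longleftrightarrow> T' (\<pi> u) (\<pi> v)" for u v
      proof -
        have "T u v \<longleftrightarrow> u \<noteq> v \<and> root_vec u v \<in> G" by (simp add: TG graph_of_def)
        also have "\<dots> \<longleftrightarrow> \<pi> u \<noteq> \<pi> v \<and> root_vec (\<pi> u) (\<pi> v) \<in> G'"
          using inG ps(3) sG ps(1) by (simp add: inj_eq)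
        also have "\<dots> \<longleftrightarrow> T' (\<pi> u) (\<pi> v)" by (simp add: TG' graph_of_def)
        finally show ?thesis .
      qed
      then show ?thesis unfolding graph_iso_def using bij by blast
    qed
  next
    assume "graph_iso T T'"
    then obtain \<pi> where pi: "bij \<pi>" "\<And>u v. T u v \<longleftrightarrow> T' (\<pi> u) (\<pi> v)"
      unfolding graph_iso_def by blast
    have "\<pi> permutes (UNIV :: 'i set)" using pi(1) by (intro bij_imp_permutes) auto
    then have pinv: "inv \<pi> permutes (UNIV :: 'i set)" by (rule permutes_inv)
    define P where "P = (permv (inv \<pi>) :: real^'i \<Rightarrow> real^'i)"
    have isoP: "isometry_V P" unfolding P_def by (rule iso_permv[OF pinv])
    have PG: "P ` G = G'"
    proof
      show "P ` G \<subseteq> G'"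
      proof
        fix y assume "y \<in> P ` G"
        then obtain g where g: "g \<in> G" "y = P g" by blast
        then obtain u v where uv: "u \<noteq> v" "g = root_vec u v" using GRS unfolding RS_def by blast
        then have "T u v" using g TG by (simp add: graph_of_def)
        then have "T' (\<pi> u) (\<pi> v)" using pi(2) by simp
        then have "root_vec (\<pi> u) (\<pi> v) \<in> G'" using TG' by (simp add: graph_of_def)
        then show "y \<in> G'" using g uv permv_root[OF pi(1)] by (simp add: P_def)
      qed
      show "G' \<subseteq> P ` G"
      proof
        fix y assume y: "y \<in> G'"
        then obtain a b where ab: "a \<noteq> b" "y = root_vec a b" using G'RS unfolding RS_def by blast
        then have "T' a b" using y TG' by (simp add: graph_of_def)
        obtain u v where "a = \<pi> u" "b = \<pi> v" using pi(1) by (metis bij_pointE)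
        then have "T u v" using pi(2) \<open>T' a b\<close> by simp
        then have "root_vec u v \<in> G" using TG by (simp add: graph_of_def)
        moreover have "P (root_vec u v) = y"
          using ab \<open>a = \<pi> u\<close> \<open>b = \<pi> v\<close> permv_root[OF pi(1)] by (simp add: P_def)
        ultimately show "y \<in> P ` G" by blast
      qed
    qed
    define M where "M = inv Q' \<circ> P \<circ> Q"
    have isoM: "isometry_V M" unfolding M_def by (intro iso_comp iso_inv Q'(1) isoP Q(1))
    have "M ` F = inv Q' ` (P ` G)" unfolding M_def G_def by (simp add: image_comp)
    also have "\<dots> = F'" using PG image_inv_f_f[OF injQ'] G'_def by simp
    finally show "family_isometric F F'" unfolding family_isometric_def using isoM by blast
  qed
qed

theorem theorem1:
  assumes "CARD('i::finite) \<ge> 2"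
  shows "(\<forall>F :: (real^'i) set. is_family F \<and> generates_A F \<longrightarrow>
            (\<exists>T. corresponds F T))
       \<and> (\<forall>(F :: (real^'i) set) T. is_family F \<and> generates_A F \<and> corresponds F T \<longrightarrow>
            is_tree T)
       \<and> (\<forall>(F :: (real^'i) set) F' T T'.
            is_family F \<and> generates_A F \<and> is_family F' \<and> generates_A F' \<and>
            corresponds F T \<and> corresponds F' T' \<longrightarrow>
            (family_isometric F F' \<longleftrightarrow> graph_iso T T'))
       \<and> (\<forall>T :: 'i \<Rightarrow> 'i \<Rightarrow> bool. is_tree T \<longrightarrow>
            (\<exists>F :: (real^'i) set. is_family F \<and> generates_A F \<and> corresponds F T))"
proof (intro conjI allI impI)
  fix F :: "(real^'i) set"
  assume h: "is_family F \<and> generates_A F"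
  then obtain Q where Q: "isometry_V Q" "Q ` F \<subseteq> RS" using part1 by blast
  have "root_realized (Q ` F)" using Q(2) unfolding root_realized_def RS_def .
  then show "\<exists>T. corresponds F T" unfolding corresponds_def using Q(1) by blast
next
  fix F :: "(real^'i) set" and T
  assume "is_family F \<and> generates_A F \<and> corresponds F T"
  then show "is_tree T" using part2 by blast
next
  fix F F' :: "(real^'i) set" and T T'
  assume "is_family F \<and> generates_A F \<and> is_family F' \<and> generates_A F' \<and>
            corresponds F T \<and> corresponds F' T'"
  then show "family_isometric F F' \<longleftrightarrow> graph_iso T T'" using part3[OF assms] by blast
next
  fix T :: "'i \<Rightarrow> 'i \<Rightarrow> bool"
  assume "is_tree T"
  then show "\<exists>F :: (real^'i) set. is_family F \<and> generates_A F \<and> corresponds F T"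
    by (rule tree_family)
qed

end
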